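(* Let $S$ be a finite alphabet and let $U,V,W$ be finite sets of words over $S$. Let $L$ be a language over $S$ such that every element of $L$ has the form $ac^nb$ with $a\in U$, $b\in V$, $c\in W$, $n\ge 0$. Then $L$ is a regular language if and only if for every $a\in U$, $b\in V$, $c\in W$ the set $$N_{a,b,c}=\{n\in\mathbb Z_{\ge 0}\mid ac^nb\in L\}$$ is the union of a finite set and finitely many one-sided arithmetic progressions $\{\alpha+t\beta\mid t\ge 0\}$.
   Context: A regular language is one recognized by a finite automaton (equivalently, described by a regular expression). *)

theory Defs
  imports Main
begin

definition lang_conc :: "'a list set \<Rightarrow> 'a list set \<Rightarrow> 'a list set" where
  "lang_conc A B = {u @ v | u v. u \<in> A \<and> v \<in> B}"

inductive_set lang_star :: "'a list set \<Rightarrow> 'a list set" for A where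
  star_nil: "[] \<in> lang_star A"
| star_app: "u \<in> A \<Longrightarrow> v \<in> lang_star A \<Longrightarrow> u @ v \<in> lang_star A"

text \<open>Regular languages over the alphabet S: the languages denoted by regular
  expressions over S (Kleene's theorem: equivalently, recognised by finite automata).\<close>
inductive_set regular_lang :: "'a set \<Rightarrow> 'a list set set" for S where
  reg_empty: "{} \<in> regular_lang S"
| reg_eps: "{[]} \<in> regular_lang S"
| reg_letter: "s \<in> S \<Longrightarrow> {[s]} \<in> regular_lang S"
| reg_union: "A \<in> regular_lang S \<Longrightarrow> B \<in> regular_lang S \<Longrightarrow> A \<union> B \<in> regular_lang S"
| reg_conc: "A \<in> regular_lang S \<Longrightarrow> B \<in> regular_lang S \<Longrightarrow> lang_conc A B \<in> regular_lang S"
| reg_star: "A \<in> regular_lang S \<Longrightarrow> lang_star A \<in> regular_lang S"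

definition word_pow :: "'a list \<Rightarrow> nat \<Rightarrow> 'a list" where
  "word_pow c n = concat (replicate n c)"

definition arith_prog :: "nat \<Rightarrow> nat \<Rightarrow> nat set" where
  "arith_prog \<alpha> \<beta> = {\<alpha> + t * \<beta> | t. True}"

definition fin_union_aps :: "nat set \<Rightarrow> bool" where
  "fin_union_aps N \<longleftrightarrow> (\<exists>F P. finite F \<and> finite P \<and>
      N = F \<union> (\<Union>(\<alpha>, \<beta>)\<in>P. arith_prog \<alpha> \<beta>))"

end

theory Submission
  imports Defs
begin

definition quot :: "'a list \<Rightarrow> 'a list set \<Rightarrow> 'a list set" where
  "quot u A = {x. u @ x \<in> A}"

definition quots :: "'a list set \<Rightarrow> 'a list set set" where
  "quots A = range (\<lambda>u. quot u A)"

lemma concI: "x = y @ z \<Longrightarrow> y \<in> A \<Longrightarrow> z \<in> B \<Longrightarrow> x \<in> lang_conc A B"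
  unfolding lang_conc_def by blast
lemma concE: "x \<in> lang_conc A B \<Longrightarrow> (\<And>y z. x = y @ z \<Longrightarrow> y \<in> A \<Longrightarrow> z \<in> B \<Longrightarrow> P) \<Longrightarrow> P"
  unfolding lang_conc_def by blast
lemma star_append: "v \<in> lang_star A \<Longrightarrow> z \<in> lang_star A \<Longrightarrow> v @ z \<in> lang_star A"
  by (induction v rule: lang_star.induct) (simp_all add: lang_star.star_app)
lemma quot_conc: "quot u (lang_conc A B) =
   lang_conc (quot u A) B \<union> \<Union>{quot w B | w. \<exists>v. u = v @ w \<and> v \<in> A}"
proof (rule set_eqI, rule iffI)
  fix x assume "x \<in> quot u (lang_conc A B)"
  then obtain p q where pq: "u @ x = p @ q" "p \<in> A" "q \<in> B"
    unfolding quot_def lang_conc_def by blast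
  from pq(1) consider us where "u = p @ us" "us @ x = q" | us where "u @ us = p" "x = us @ q"
    using append_eq_append_conv2[of u x p q] by blast
  then show "x \<in> lang_conc (quot u A) B \<union> \<Union>{quot w B | w. \<exists>v. u = v @ w \<and> v \<in> A}"
  proof cases
    case 1
    then have "x \<in> quot us B" using pq by (simp add: quot_def)
    then show ?thesis using 1 pq by blast
  next
    case 2
    then have "us \<in> quot u A" using pq by (simp add: quot_def)
    then show ?thesis using 2 pq unfolding lang_conc_def by blast
  qed
next
  fix x assume "x \<in> lang_conc (quot u A) B \<union> \<Union>{quot w B | w. \<exists>v. u = v @ w \<and> v \<in> A}"
  then show "x \<in> quot u (lang_conc A B)"
  proof
    assume "x \<in> lang_conc (quot u A) B"
    then obtain y q where "x = y @ q" "y \<in> quot u A" "q \<in> B" unfolding lang_conc_def by (auto simp only: mem_Collect_eq)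
    then have "x = y @ q" "u @ y \<in> A" "q \<in> B" by (auto simp: quot_def)
    then have "u @ x = (u @ y) @ q" by simp
    then show ?thesis using \<open>u @ y \<in> A\<close> \<open>q \<in> B\<close> unfolding lang_conc_def quot_def by blast
  next
    assume "x \<in> \<Union>{quot w B | w. \<exists>v. u = v @ w \<and> v \<in> A}"
    then obtain v w where "u = v @ w" "v \<in> A" "w @ x \<in> B" unfolding quot_def by blast
    then show ?thesis unfolding lang_conc_def quot_def by auto
  qed
qed

lemma star_split:
  assumes "s \<in> lang_star A"
  shows "s = u @ x \<Longrightarrow> u \<noteq> [] \<Longrightarrow> \<exists>v w y z. u = v @ w \<and> v \<in> lang_star A \<and> w \<noteq> [] \<and> w @ y \<in> A \<and> x = y @ z \<and> z \<in> lang_star A"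
  using assms
proof (induction arbitrary: u x rule: lang_star.induct)
  case star_nil
  then show ?case by simp
next
  case (star_app p q)
  from star_app.prems(1) have "u @ x = p @ q" by simp
  then consider us where "u = p @ us" "us @ x = q" | us where "u @ us = p" "x = us @ q"
    using append_eq_append_conv2[of u x p q] by blast
  then show ?case
  proof cases
    case 1
    show ?thesis
    proof (cases "us = []")
      case True
      have e: "[] \<in> lang_star A" by (rule lang_star.star_nil)
      have "u = [] @ p" "p \<noteq> []" "p @ [] \<in> A" "x = [] @ x" "x \<in> lang_star A"
        using 1 True star_app.hyps star_app.prems by auto
      then show ?thesis using e by blast
    next
      case False
      from star_app.IH[OF 1(2)[symmetric] False] obtain v w y z where
        h: "us = v @ w" "v \<in> lang_star A" "w \<noteq> []" "w @ y \<in> A" "x = y @ z" "z \<in> lang_star A" by blast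
      have "p @ v \<in> lang_star A" using star_app.hyps(1) h(2) by (rule lang_star.star_app)
      moreover have "u = (p @ v) @ w" using 1 h by simp
      ultimately show ?thesis using h by blast
    qed
  next
    case 2
    have e: "[] \<in> lang_star A" by (rule lang_star.star_nil)
    have "u = [] @ u" "u @ us \<in> A" "x = us @ q" "q \<in> lang_star A"
      using 2 star_app.hyps by auto
    then show ?thesis using e star_app.prems(2) by blast
  qed
qed

lemma quot_star: assumes "u \<noteq> []" shows "quot u (lang_star A) =
   \<Union>{lang_conc (quot w A) (lang_star A) | w. \<exists>v. u = v @ w \<and> v \<in> lang_star A \<and> w \<noteq> []}"
proof (rule set_eqI, rule iffI)
  fix x assume "x \<in> quot u (lang_star A)"
  then have "u @ x \<in> lang_star A" by (simp add: quot_def)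
  then obtain v w y z where h: "u = v @ w" "v \<in> lang_star A" "w \<noteq> []" "w @ y \<in> A" "x = y @ z" "z \<in> lang_star A"
    using star_split[of "u @ x" A u x] assms by blast
  have "y \<in> quot w A" using h by (simp add: quot_def)
  then have "x \<in> lang_conc (quot w A) (lang_star A)" using h by (intro concI)
  moreover have "lang_conc (quot w A) (lang_star A) \<in> {lang_conc (quot w A) (lang_star A) | w. \<exists>v. u = v @ w \<and> v \<in> lang_star A \<and> w \<noteq> []}"
    using h by blast
  ultimately show "x \<in> \<Union>{lang_conc (quot w A) (lang_star A) | w. \<exists>v. u = v @ w \<and> v \<in> lang_star A \<and> w \<noteq> []}"
    by (rule UnionI[rotated])
next
  fix x assume "x \<in> \<Union>{lang_conc (quot w A) (lang_star A) | w. \<exists>v. u = v @ w \<and> v \<in> lang_star A \<and> w \<noteq> []}"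
  then obtain v w where vw: "u = v @ w" "v \<in> lang_star A" "x \<in> lang_conc (quot w A) (lang_star A)"
    by blast
  from vw(3) obtain y z where h: "x = y @ z" "y \<in> quot w A" "z \<in> lang_star A" by (rule concE)
  have "(w @ y) @ z \<in> lang_star A" using h by (intro lang_star.star_app) (simp_all add: quot_def)
  then have "v @ ((w @ y) @ z) \<in> lang_star A" using vw star_append by blast
  then show "x \<in> quot u (lang_star A)" using h vw unfolding quot_def by simp
qed

lemma fq_letter: "finite (quots {[s]})"
proof -
  have "quots {[s]} \<subseteq> {{[s]}, {[]}, {}}"
  proof
    fix Q assume "Q \<in> quots {[s]}"
    then obtain u where u: "Q = quot u {[s]}" by (auto simp: quots_def)
    show "Q \<in> {{[s]}, {[]}, {}}"
    proof (cases u)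
      case Nil
      then show ?thesis using u by (simp add: quot_def)
    next
      case (Cons h t)
      show ?thesis
      proof (cases "h = s \<and> t = []")
        case True
        then have "Q = {[]}" using u Cons by (auto simp: quot_def)
        then show ?thesis by simp
      next
        case False
        then have "Q = {}" using u Cons by (auto simp: quot_def)
        then show ?thesis by simp
      qed
    qed
  qed
  then show ?thesis using finite_subset by blast
qed

lemma fq_union: "finite (quots A) \<Longrightarrow> finite (quots B) \<Longrightarrow> finite (quots (A \<union> B))"
proof -
  assume fA: "finite (quots A)" and fB: "finite (quots B)"
  have "quots (A \<union> B) \<subseteq> (\<lambda>(X, Y). X \<union> Y) ` (quots A \<times> quots B)"
  proof
    fix Q assume "Q \<in> quots (A \<union> B)"
    then obtain u where u: "Q = quot u (A \<union> B)" by (auto simp: quots_def)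
    have Q: "Q = (\<lambda>(X, Y). X \<union> Y) (quot u A, quot u B)" unfolding u quot_def by auto
    have m: "(quot u A, quot u B) \<in> quots A \<times> quots B" by (simp add: quots_def)
    show "Q \<in> (\<lambda>(X, Y). X \<union> Y) ` (quots A \<times> quots B)"
      unfolding Q by (rule imageI[OF m])
  qed
  then show ?thesis using fA fB finite_subset by blast
qed

lemma fq_conc: "finite (quots A) \<Longrightarrow> finite (quots B) \<Longrightarrow> finite (quots (lang_conc A B))"
proof -
  assume fA: "finite (quots A)" and fB: "finite (quots B)"
  have "quots (lang_conc A B) \<subseteq> (\<lambda>(X, T). lang_conc X B \<union> \<Union>T) ` (quots A \<times> Pow (quots B))"
  proof
    fix Q assume "Q \<in> quots (lang_conc A B)"
    then obtain u where u: "Q = quot u (lang_conc A B)" by (auto simp: quots_def)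
    have m: "(quot u A, {quot w B | w. \<exists>v. u = v @ w \<and> v \<in> A}) \<in> quots A \<times> Pow (quots B)"
      by (auto simp: quots_def)
    have Q: "Q = (\<lambda>(X, T). lang_conc X B \<union> \<Union>T) (quot u A, {quot w B | w. \<exists>v. u = v @ w \<and> v \<in> A})"
      unfolding u quot_conc by simp
    show "Q \<in> (\<lambda>(X, T). lang_conc X B \<union> \<Union>T) ` (quots A \<times> Pow (quots B))"
      unfolding Q by (rule imageI[OF m])
  qed
  moreover have "finite ((\<lambda>(X, T). lang_conc X B \<union> \<Union>T) ` (quots A \<times> Pow (quots B)))"
    using fA fB by simp
  ultimately show ?thesis by (rule finite_subset)
qed

lemma fq_star: "finite (quots A) \<Longrightarrow> finite (quots (lang_star A))"
proof -
  assume fA: "finite (quots A)"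
  define G where "G = (\<lambda>T. \<Union>((\<lambda>X. lang_conc X (lang_star A)) ` T))"
  have "quots (lang_star A) \<subseteq> insert (lang_star A) (G ` Pow (quots A))"
  proof
    fix Q assume "Q \<in> quots (lang_star A)"
    then obtain u where u: "Q = quot u (lang_star A)" by (auto simp: quots_def)
    show "Q \<in> insert (lang_star A) (G ` Pow (quots A))"
    proof (cases "u = []")
      case True
      then show ?thesis using u by (simp add: quot_def)
    next
      case False
      define Ws where "Ws = {w. \<exists>v. u = v @ w \<and> v \<in> lang_star A \<and> w \<noteq> []}"
      have e1: "{lang_conc (quot w A) (lang_star A) | w. \<exists>v. u = v @ w \<and> v \<in> lang_star A \<and> w \<noteq> []}
          = (\<lambda>w. lang_conc (quot w A) (lang_star A)) ` Ws"
        unfolding Ws_def by auto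
      have "Q = G ((\<lambda>w. quot w A) ` Ws)"
        unfolding u quot_star[OF False] e1 G_def image_image ..
      moreover have "(\<lambda>w. quot w A) ` Ws \<in> Pow (quots A)"
        by (auto simp: quots_def)
      ultimately show ?thesis by simp
    qed
  qed
  moreover have "finite (insert (lang_star A) (G ` Pow (quots A)))"
    using fA by simp
  ultimately show ?thesis by (rule finite_subset)
qed

lemma finite_quots: "A \<in> regular_lang S \<Longrightarrow> finite (quots A)"
proof (induction rule: regular_lang.induct)
  case reg_empty
  have "quots {} \<subseteq> {{}}" by (auto simp: quots_def quot_def)
  then show ?case using finite_subset by blast
next
  case reg_eps
  have "quots {[]} \<subseteq> {{[]}, {}}" by (auto simp: quots_def quot_def)
  then show ?case using finite_subset by blast
next
  case (reg_letter s)
  show ?case by (rule fq_letter)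
next
  case (reg_union A B)
  show ?case using reg_union.IH by (rule fq_union)
next
  case (reg_conc A B)
  show ?case using reg_conc.IH by (rule fq_conc)
next
  case (reg_star A)
  show ?case using reg_star.IH by (rule fq_star)
qed

lemma word_pow_add: "word_pow c (m + n) = word_pow c m @ word_pow c n"
  by (simp add: word_pow_def replicate_add)

lemma word_pow_Suc: "word_pow c (Suc n) = c @ word_pow c n"
  by (simp add: word_pow_def)

lemma word_pow_Suc': "word_pow c (Suc n) = word_pow c n @ c"
  using word_pow_add[of c n 1] by (simp add: word_pow_def)

lemma word_pow_mult: "word_pow c (t * \<beta>) = word_pow (word_pow c \<beta>) t"
  by (induction t) (simp_all add: word_pow_add word_pow_Suc, simp add: word_pow_def)

lemma star_single: "lang_star {w} = range (word_pow w)"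
proof
  show "lang_star {w} \<subseteq> range (word_pow w)"
  proof
    fix x assume "x \<in> lang_star {w}"
    then show "x \<in> range (word_pow w)"
    proof (induction rule: lang_star.induct)
      case star_nil
      then show ?case by (rule range_eqI[of _ _ 0]) (simp add: word_pow_def)
    next
      case (star_app u v)
      then obtain n where "v = word_pow w n" by auto
      then show ?case using star_app by (intro range_eqI[of _ _ "Suc n"]) (simp add: word_pow_Suc)
    qed
  qed
next
  show "range (word_pow w) \<subseteq> lang_star {w}"
  proof
    fix x assume "x \<in> range (word_pow w)"
    then obtain n where "x = word_pow w n" by auto
    moreover have "word_pow w n \<in> lang_star {w}"
      by (induction n) (auto simp: word_pow_Suc intro: lang_star.intros, simp add: word_pow_def lang_star.star_nil)
    ultimately show "x \<in> lang_star {w}" by simp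
  qed
qed

lemma word_reg: "w \<in> lists S \<Longrightarrow> {w} \<in> regular_lang S"
proof (induction w)
  case Nil
  show ?case by (simp add: regular_lang.reg_eps)
next
  case (Cons x w)
  have "{x # w} = lang_conc {[x]} {w}" by (auto simp: lang_conc_def)
  then show ?case using Cons by (auto intro: reg_conc reg_letter)
qed

lemma union_reg: "finite I \<Longrightarrow> (\<forall>i\<in>I. X i \<in> regular_lang S) \<Longrightarrow> \<Union>(X ` I) \<in> regular_lang S"
  by (induction rule: finite_induct) (auto intro: reg_empty reg_union)

lemma word_pow_lists: "c \<in> lists S \<Longrightarrow> word_pow c n \<in> lists S"
  by (induction n) (simp_all add: word_pow_Suc, simp add: word_pow_def)

lemma ap_lang: "lang_conc {a @ word_pow c \<alpha>} (lang_conc (lang_star {word_pow c \<beta>}) {b})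
   = {a @ word_pow c n @ b | n. n \<in> arith_prog \<alpha> \<beta>}"
  unfolding lang_conc_def arith_prog_def star_single
  apply (auto simp: word_pow_add word_pow_mult)
  by (metis word_pow_add word_pow_mult)

lemma periodic:
  assumes fin: "finite (quots L)"
  shows "fin_union_aps {n. a @ word_pow c n @ b \<in> L}"
proof -
  define N where "N = {n. a @ word_pow c n @ b \<in> L}"
  define f where "f n = quot (a @ word_pow c n) L" for n
  have fS: "f (Suc n) = quot c (f n)" for n
    by (simp add: f_def quot_def word_pow_Suc')
  have "range f \<subseteq> quots L" by (auto simp: f_def quots_def)
  then have "finite (range f)" using fin finite_subset by blast
  then have "\<not> inj f" using finite_imageD by fastforce
  then obtain i j where ij: "i < j" "f i = f j"
    unfolding inj_def by (metis linorder_neq_iff)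
  define p where "p = j - i"
  have p: "p > 0" "i + p = j" using ij by (auto simp: p_def)
  have shift: "f (i + k + p) = f (i + k)" for k
  proof (induction k)
    case 0
    then show ?case using ij p by simp
  next
    case (Suc k)
    have "f (i + Suc k + p) = f (Suc (i + k + p))" by simp
    also have "\<dots> = quot c (f (i + k + p))" by (rule fS)
    also have "\<dots> = quot c (f (i + k))" using Suc by simp
    also have "\<dots> = f (i + Suc k)" using fS by simp
    finally show ?case .
  qed
  have shiftt: "f (i + k + t * p) = f (i + k)" for k t
  proof (induction t)
    case 0
    then show ?case by simp
  next
    case (Suc t)
    have "f (i + k + Suc t * p) = f (i + (k + t * p) + p)" by (simp add: algebra_simps)
    also have "\<dots> = f (i + (k + t * p))" by (rule shift)
    also have "\<dots> = f (i + k)" using Suc by (simp add: algebra_simps)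
    finally show ?case .
  qed
  have memN: "n \<in> N \<longleftrightarrow> b \<in> f n" for n by (simp add: N_def f_def quot_def)
  define F where "F = {n \<in> N. n < i}"
  define P where "P = (\<lambda>r. (r, p)) ` {r \<in> N. i \<le> r \<and> r < j}"
  have "N = F \<union> (\<Union>(\<alpha>, \<beta>)\<in>P. arith_prog \<alpha> \<beta>)"
  proof (rule set_eqI, rule iffI)
    fix n assume n: "n \<in> N"
    show "n \<in> F \<union> (\<Union>(\<alpha>, \<beta>)\<in>P. arith_prog \<alpha> \<beta>)"
    proof (cases "n < i")
      case True
      then show ?thesis using n by (simp add: F_def)
    next
      case False
      define k where "k = (n - i) mod p"
      define t where "t = (n - i) div p"
      have nd: "n = i + k + t * p" using False unfolding k_def t_def
        by (metis add.commute add.left_commute div_mult_mod_eq le_add_diff_inverse not_less)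
      have kp: "k < p" using p by (simp add: k_def)
      have "f n = f (i + k)" using nd shiftt by metis
      then have "i + k \<in> N" using n memN by simp
      moreover have "i + k < j" using kp p by simp
      ultimately have "(i + k, p) \<in> P" by (auto simp: P_def)
      moreover have "n \<in> arith_prog (i + k) p" using nd by (auto simp: arith_prog_def)
      ultimately show ?thesis by blast
    qed
  next
    fix n assume "n \<in> F \<union> (\<Union>(\<alpha>, \<beta>)\<in>P. arith_prog \<alpha> \<beta>)"
    then show "n \<in> N"
    proof
      assume "n \<in> F" then show ?thesis by (simp add: F_def)
    next
      assume "n \<in> (\<Union>(\<alpha>, \<beta>)\<in>P. arith_prog \<alpha> \<beta>)"
      then obtain r t where r: "r \<in> N" "i \<le> r" "n = r + t * p"
        by (auto simp: P_def arith_prog_def)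
      have "f n = f (i + (r - i) + t * p)" using r by simp
      also have "\<dots> = f (i + (r - i))" by (rule shiftt)
      also have "\<dots> = f r" using r by simp
      finally show ?thesis using r memN by simp
    qed
  qed
  moreover have "finite F" by (auto simp: F_def)
  moreover have "finite P" by (auto simp: P_def)
  ultimately show ?thesis unfolding fin_union_aps_def N_def by blast
qed

lemma set_split: "{f n | n. n \<in> F \<union> (\<Union>p\<in>P. H p)} = (\<Union>n\<in>F. {f n}) \<union> (\<Union>p\<in>P. {f n | n. n \<in> H p})"
  by blast

lemma block_reg:
  fixes F :: "nat set" and P :: "(nat \<times> nat) set"
  assumes ls: "a \<in> lists S" "b \<in> lists S" "c \<in> lists S"
    and FP: "finite F" "finite P"
  shows "{a @ word_pow c n @ b | n. n \<in> F \<union> (\<Union>(\<alpha>, \<beta>)\<in>P. arith_prog \<alpha> \<beta>)} \<in> regular_lang S"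
proof -
  define G where "G = (\<lambda>(\<alpha>, \<beta>). lang_conc {a @ word_pow c \<alpha>} (lang_conc (lang_star {word_pow c \<beta>}) {b}))"
  have Gp: "G p = {a @ word_pow c n @ b | n. n \<in> (\<lambda>(\<alpha>, \<beta>). arith_prog \<alpha> \<beta>) p}" for p
    by (cases p) (simp add: G_def ap_lang)
  have "{a @ word_pow c n @ b | n. n \<in> F \<union> (\<Union>(\<alpha>, \<beta>)\<in>P. arith_prog \<alpha> \<beta>)}
     = (\<Union>n\<in>F. {a @ word_pow c n @ b}) \<union> (\<Union>p\<in>P. G p)"
    unfolding Gp by (rule set_split)
  moreover have "(\<Union>n\<in>F. {a @ word_pow c n @ b}) \<in> regular_lang S"
  proof (rule union_reg[OF FP(1)], rule ballI)
    fix n show "{a @ word_pow c n @ b} \<in> regular_lang S"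
      using ls word_pow_lists[OF ls(3)] by (intro word_reg) simp
  qed
  moreover have "(\<Union>p\<in>P. G p) \<in> regular_lang S"
  proof (rule union_reg[OF FP(2)], rule ballI)
    fix p :: "nat \<times> nat"
    obtain \<alpha> \<beta> :: nat where p: "p = (\<alpha>, \<beta>)" by (cases p)
    have w1: "a @ word_pow c \<alpha> \<in> lists S" using ls word_pow_lists[OF ls(3)] by simp
    have w2: "word_pow c \<beta> \<in> lists S" using word_pow_lists[OF ls(3)] by simp
    show "G p \<in> regular_lang S" unfolding p G_def
      by (simp, intro reg_conc reg_star word_reg w1 w2 ls(2))
  qed
  ultimately show ?thesis by (simp add: reg_union)
qed

theorem proposition2p2:
  fixes S :: "'a set" and U V W L :: "'a list set"
  assumes "finite S"
    and "finite U" and "finite V" and "finite W"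
    and "U \<subseteq> lists S" and "V \<subseteq> lists S" and "W \<subseteq> lists S"
    and "L \<subseteq> lists S"
    and "\<forall>w\<in>L. \<exists>a\<in>U. \<exists>b\<in>V. \<exists>c\<in>W. \<exists>n. w = a @ word_pow c n @ b"
  shows "L \<in> regular_lang S \<longleftrightarrow>
    (\<forall>a\<in>U. \<forall>b\<in>V. \<forall>c\<in>W. fin_union_aps {n. a @ word_pow c n @ b \<in> L})"
proof
  assume "L \<in> regular_lang S"
  then have "finite (quots L)" by (rule finite_quots)
  then show "\<forall>a\<in>U. \<forall>b\<in>V. \<forall>c\<in>W. fin_union_aps {n. a @ word_pow c n @ b \<in> L}"
    by (intro ballI periodic)
next
  assume H: "\<forall>a\<in>U. \<forall>b\<in>V. \<forall>c\<in>W. fin_union_aps {n. a @ word_pow c n @ b \<in> L}"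
  define M where "M = (\<lambda>(a, b, c). {a @ word_pow c n @ b | n. n \<in> {n. a @ word_pow c n @ b \<in> L}})"
  have Leq: "L = \<Union>(M ` (U \<times> V \<times> W))"
  proof
    show "L \<subseteq> \<Union>(M ` (U \<times> V \<times> W))"
    proof
      fix w assume w: "w \<in> L"
      then obtain a b c n where abc: "a \<in> U" "b \<in> V" "c \<in> W" "w = a @ word_pow c n @ b"
        using assms(9) by blast
      have "w \<in> M (a, b, c)" using w abc(4) unfolding M_def by auto
      moreover have "(a, b, c) \<in> U \<times> V \<times> W" using abc by simp
      ultimately show "w \<in> \<Union>(M ` (U \<times> V \<times> W))" by blast
    qed
  next
    show "\<Union>(M ` (U \<times> V \<times> W)) \<subseteq> L"
    proof
      fix w assume "w \<in> \<Union>(M ` (U \<times> V \<times> W))"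
      then obtain x where x: "x \<in> U \<times> V \<times> W" "w \<in> M x" by blast
      obtain a b c where "x = (a, b, c)" by (cases x) auto
      then show "w \<in> L" using x(2) by (auto simp: M_def)
    qed
  qed
  have "\<forall>x\<in>U \<times> V \<times> W. M x \<in> regular_lang S"
  proof
    fix x assume "x \<in> U \<times> V \<times> W"
    then obtain a b c where abc: "x = (a, b, c)" "a \<in> U" "b \<in> V" "c \<in> W" by auto
    then have ls: "a \<in> lists S" "b \<in> lists S" "c \<in> lists S" using assms(5-7) by auto
    have "fin_union_aps {n. a @ word_pow c n @ b \<in> L}" using H abc(2-4) by blast
    then obtain F P where FP: "finite F" "finite P"
      "{n. a @ word_pow c n @ b \<in> L} = F \<union> (\<Union>(\<alpha>, \<beta>)\<in>P. arith_prog \<alpha> \<beta>)"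
      unfolding fin_union_aps_def by (elim exE conjE) simp
    have "M x = {a @ word_pow c n @ b | n. n \<in> F \<union> (\<Union>(\<alpha>, \<beta>)\<in>P. arith_prog \<alpha> \<beta>)}"
      unfolding abc(1) M_def FP(3)[symmetric] by simp
    then show "M x \<in> regular_lang S" using block_reg[OF ls FP(1,2)] by simp
  qed
  then have "\<Union>(M ` (U \<times> V \<times> W)) \<in> regular_lang S"
    using assms(2-4) by (intro union_reg) simp_all
  then show "L \<in> regular_lang S" by (subst Leq)
qed

end
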